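(* Let $V$ be a finite-dimensional irreducible $T$-module. Let $r,\delta,t,\delta^*$ be the nonnegative integers with $r+\delta\le d$, $t+\delta^*\le d$ such that for $0\le i\le d$: $e^*_iV\ne0$ if and only if $r\le i\le r+\delta$, and $e_iV\ne0$ if and only if $t\le i\le t+\delta^*$. Then $\delta=\delta^*$, and the sequence $(a;\{e_i\}_{i=t}^{t+\delta};a^*;\{e^*_i\}_{i=r}^{r+\delta})$ acts on $V$ as a tridiagonal system.
   Context: $\mathbb{F}$ is a field, $d\ge0$, and $\{\theta_i\}_{i=0}^d$, $\{\theta^*_i\}_{i=0}^d$ are scalars in $\mathbb{F}$ with $\theta_i\ne\theta_j$, $\theta^*_i\ne\theta^*_j$ for $i\ne j$, such that $\frac{\theta_{i-2}-\theta_{i+1}}{\theta_{i-1}-\theta_i}$ and $\frac{\theta^*_{i-2}-\theta^*_{i+1}}{\theta^*_{i-1}-\theta^*_i}$ are equal and independent of $i$ for $2\le i\le d-1$. $T$ is the associative $\mathbb{F}$-algebra with $1$ generated by $a,e_0,\dots,e_d,a^*,e^*_0,\dots,e^*_d$ with relations $e_ie_j=\delta_{ij}e_i$, $e^*_ie^*_j=\delta_{ij}e^*_i$, $\sum_ie_i=\sum_ie^*_i=1$, $a=\sum_i\theta_ie_i$, $a^*=\sum_i\theta^*_ie^*_i$, and $e^*_ia^ke^*_j=0$, $e_i{a^*}^ke_j=0$ whenever $0\le i,j,k\le d$ and $k<|i-j|$. (The integers $r,\delta,t,\delta^*$ exist by a preceding lemma.) A tridiagonal pair on a finite-dimensional nonzero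 space $V$ is a pair of diagonalizable linear maps $A,A^*$ such that some ordering $V_0,\dots,V_d$ of the eigenspaces of $A$ satisfies $A^*V_i\subseteq V_{i-1}+V_i+V_{i+1}$, some ordering $V^*_0,\dots,V^*_\delta$ of eigenspaces of $A^*$ satisfies $AV^*_i\subseteq V^*_{i-1}+V^*_i+V^*_{i+1}$ (out-of-range terms zero), and no subspace $W\ne0,V$ is invariant under both; such orderings are standard. A tridiagonal system $(A;\{E_i\};A^*;\{E^*_i\})$ consists of a tridiagonal pair together with standard orderings of the primitive idempotents (projections onto eigenspaces along the others) of $A$ and of $A^*$. *)

theory Defs
  imports Complex_Main
begin

text \<open>A sequence E 0, ..., E D of maps on the whole space (type 'v, scalar
multiplication scale) is the sequence of primitive idempotents of A in some
ordering: there are pairwise distinct scalars th 0, ..., th D such that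
every E i v lies in the th i - eigenspace of A, each E i is nonzero, and
every vector is the sum of its components E i v.  (Since eigenspaces for
distinct eigenvalues are independent, this says exactly that A is
diagonalizable with eigenspaces E 0 V, ..., E D V and that E i is the
projection onto E i V along the other eigenspaces.)\<close>
definition primitive_idempotent_seq ::
  "('f::field \<Rightarrow> 'v::ab_group_add \<Rightarrow> 'v) \<Rightarrow> ('v \<Rightarrow> 'v) \<Rightarrow> (nat \<Rightarrow> 'v \<Rightarrow> 'v) \<Rightarrow> nat \<Rightarrow> bool"
where
  "primitive_idempotent_seq scale A E D \<longleftrightarrow>
     (\<exists>th :: nat \<Rightarrow> 'f. inj_on th {..D}
        \<and> (\<forall>i\<le>D. \<forall>v. A (E i v) = scale (th i) (E i v))
        \<and> (\<forall>i\<le>D. \<exists>v. E i v \<noteq> 0)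
        \<and> (\<forall>v. (\<Sum>i\<le>D. E i v) = v))"

definition tridiagonal_action ::
  "('v::ab_group_add \<Rightarrow> 'v) \<Rightarrow> (nat \<Rightarrow> 'v \<Rightarrow> 'v) \<Rightarrow> nat \<Rightarrow> bool"
where
  "tridiagonal_action B E D \<longleftrightarrow>
     (\<forall>i\<le>D. \<forall>v. \<exists>u :: nat \<Rightarrow> 'v.
        B (E i v) = (\<Sum>j\<in>{j. j \<le> D \<and> i \<le> Suc j \<and> j \<le> Suc i}. E j (u j)))"

definition tridiagonal_system ::
  "('f::field \<Rightarrow> 'v::ab_group_add \<Rightarrow> 'v) \<Rightarrow> ('v \<Rightarrow> 'v) \<Rightarrow> (nat \<Rightarrow> 'v \<Rightarrow> 'v) \<Rightarrow> nat
    \<Rightarrow> ('v \<Rightarrow> 'v) \<Rightarrow> (nat \<Rightarrow> 'v \<Rightarrow> 'v) \<Rightarrow> nat \<Rightarrow> bool"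
where
  "tridiagonal_system scale A E D As Es Ds \<longleftrightarrow>
     Vector_Spaces.linear scale scale A \<and> Vector_Spaces.linear scale scale As
     \<and> primitive_idempotent_seq scale A E D
     \<and> primitive_idempotent_seq scale As Es Ds
     \<and> tridiagonal_action As E D
     \<and> tridiagonal_action A Es Ds
     \<and> (\<forall>W. module.subspace scale W \<and> A ` W \<subseteq> W \<and> As ` W \<subseteq> W
            \<longrightarrow> W = {0} \<or> W = UNIV)"

definition T_module ::
  "('f::field \<Rightarrow> 'v::ab_group_add \<Rightarrow> 'v) \<Rightarrow> nat \<Rightarrow> (nat \<Rightarrow> 'f) \<Rightarrow> (nat \<Rightarrow> 'f)
    \<Rightarrow> ('v \<Rightarrow> 'v) \<Rightarrow> (nat \<Rightarrow> 'v \<Rightarrow> 'v) \<Rightarrow> ('v \<Rightarrow> 'v) \<Rightarrow> (nat \<Rightarrow> 'v \<Rightarrow> 'v) \<Rightarrow> bool"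
where
  "T_module scale d th ths a e as es \<longleftrightarrow>
     Vector_Spaces.linear scale scale a \<and> Vector_Spaces.linear scale scale as
     \<and> (\<forall>i\<le>d. Vector_Spaces.linear scale scale (e i) \<and> Vector_Spaces.linear scale scale (es i))
     \<and> (\<forall>i\<le>d. \<forall>j\<le>d. \<forall>v. e i (e j v) = (if i = j then e i v else 0))
     \<and> (\<forall>i\<le>d. \<forall>j\<le>d. \<forall>v. es i (es j v) = (if i = j then es i v else 0))
     \<and> (\<forall>v. (\<Sum>i\<le>d. e i v) = v) \<and> (\<forall>v. (\<Sum>i\<le>d. es i v) = v)
     \<and> (\<forall>v. a v = (\<Sum>i\<le>d. scale (th i) (e i v)))
     \<and> (\<forall>v. as v = (\<Sum>i\<le>d. scale (ths i) (es i v)))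
     \<and> (\<forall>i\<le>d. \<forall>j\<le>d. \<forall>k\<le>d. k < nat \<bar>int i - int j\<bar> \<longrightarrow>
          (\<forall>v. es i ((a ^^ k) (es j v)) = 0) \<and> (\<forall>v. e i ((as ^^ k) (e j v)) = 0))"

definition irreducible_T_module ::
  "('f::field \<Rightarrow> 'v::ab_group_add \<Rightarrow> 'v) \<Rightarrow> nat \<Rightarrow> (nat \<Rightarrow> 'f) \<Rightarrow> (nat \<Rightarrow> 'f)
    \<Rightarrow> ('v \<Rightarrow> 'v) \<Rightarrow> (nat \<Rightarrow> 'v \<Rightarrow> 'v) \<Rightarrow> ('v \<Rightarrow> 'v) \<Rightarrow> (nat \<Rightarrow> 'v \<Rightarrow> 'v) \<Rightarrow> bool"
where
  "irreducible_T_module scale d th ths a e as es \<longleftrightarrow>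
     T_module scale d th ths a e as es \<and> (\<exists>v::'v. v \<noteq> 0)
     \<and> (\<forall>W. module.subspace scale W \<and> a ` W \<subseteq> W \<and> as ` W \<subseteq> W
            \<and> (\<forall>i\<le>d. e i ` W \<subseteq> W \<and> es i ` W \<subseteq> W)
            \<longrightarrow> W = {0} \<or> W = UNIV)"

end

theory Submission imports Defs begin

locale tset = vector_space scale for scale :: "'f::field \<Rightarrow> 'v::ab_group_add \<Rightarrow> 'v" +
  fixes d :: nat and th ths :: "nat \<Rightarrow> 'f" and a as :: "'v \<Rightarrow> 'v" and e es :: "nat \<Rightarrow> 'v \<Rightarrow> 'v"
  assumes T: "T_module scale d th ths a e as es"
    and thd: "inj_on th {..d}"
begin
sublocale vsp: vector_space_pair scale scale ..

lemma lin_a: "Vector_Spaces.linear scale scale a" using T unfolding T_module_def by blast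
lemma lin_as: "Vector_Spaces.linear scale scale as" using T unfolding T_module_def by blast
lemma lin_e: "i \<le> d \<Longrightarrow> Vector_Spaces.linear scale scale (e i)" using T unfolding T_module_def by blast
lemma ee: "i \<le> d \<Longrightarrow> j \<le> d \<Longrightarrow> e i (e j v) = (if i = j then e i v else 0)"
  using T unfolding T_module_def by blast
lemma esum: "(\<Sum>i\<le>d. e i v) = v" using T unfolding T_module_def by blast
lemma adef: "a v = (\<Sum>i\<le>d. scale (th i) (e i v))" using T unfolding T_module_def by blast

lemma ea: assumes j: "j \<le> d" shows "e j (a u) = scale (th j) (e j u)"
proof -
  have "e j (a u) = (\<Sum>i\<le>d. e j (scale (th i) (e i u)))"
    by (simp add: adef vsp.linear_sum[OF lin_e[OF j]])
  also have "\<dots> = (\<Sum>i\<le>d. if i = j then scale (th j) (e j u) else 0)"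
    by (rule sum.cong) (auto simp: vsp.linear_scale[OF lin_e[OF j]] ee j)
  also have "\<dots> = scale (th j) (e j u)" using j by simp
  finally show ?thesis .
qed

lemma eae: assumes "i \<le> d" "j \<le> d" "i + 2 \<le> j \<or> j + 2 \<le> i"
  shows "e i (as (e j v)) = 0"
proof -
  have "1 \<le> d" using assms by auto
  moreover have "1 < nat \<bar>int i - int j\<bar>" using assms by auto
  ultimately have "e i ((as ^^ 1) (e j v)) = 0"
    using T assms(1,2) unfolding T_module_def by blast
  thus ?thesis by simp
qed

lemma proj_inv:
  assumes W: "subspace W" and aW: "a ` W \<subseteq> W" and i: "i \<le> d"
  shows "e i ` W \<subseteq> W"
proof -
  have key: "S \<subseteq> {..d} \<Longrightarrow> \<forall>u\<in>W. (\<forall>j\<le>d. j \<notin> S \<longrightarrow> e j u = 0) \<longrightarrow> (\<forall>i\<in>S. e i u \<in> W)"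
    if fS: "finite S" for S
    using fS
  proof (induction S rule: finite_induct)
    case empty
    then show ?case by simp
  next
    case (insert m S)
    show ?case
    proof (intro ballI impI)
      fix u i assume u: "u \<in> W" and supp: "\<forall>j\<le>d. j \<notin> insert m S \<longrightarrow> e j u = 0"
        and iS: "i \<in> insert m S"
      have md: "m \<le> d" using insert.prems by auto
      define u' where "u' = a u - scale (th m) u"
      have u'W: "u' \<in> W" unfolding u'_def
        using aW u W by (meson image_subset_iff subspace_diff subspace_scale)
      have eu': "e j u' = scale (th j - th m) (e j u)" if "j \<le> d" for j
        unfolding u'_def using that
        by (simp add: vsp.linear_diff[OF lin_e[OF that]] vsp.linear_scale[OF lin_e[OF that]] ea scale_left_diff_distrib)
      have supp': "\<forall>j\<le>d. j \<notin> S \<longrightarrow> e j u' = 0"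
        using supp eu' by (metis insert_iff right_minus_eq scale_eq_0_iff)
      have IH: "\<forall>i\<in>S. e i u' \<in> W" using insert.IH insert.prems u'W supp' by auto
      have Sin: "e k u \<in> W" if k: "k \<in> S" for k
      proof -
        have kd: "k \<le> d" using k insert.prems by auto
        have "k \<noteq> m" using k insert.hyps by auto
        then have ne: "th k - th m \<noteq> 0" using thd kd md by (auto simp: inj_on_def)
        have "e k u = scale (inverse (th k - th m)) (e k u')"
          using eu'[OF kd] ne by simp
        then show ?thesis using IH k W subspace_scale by metis
      qed
      show "e i u \<in> W"
      proof (cases "i = m")
        case False then show ?thesis using iS Sin by auto
      next
        case True
        have "u = (\<Sum>j\<le>d. e j u)" by (rule esum[symmetric])
        also have "\<dots> = (\<Sum>j\<in>insert m S. e j u)"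
          apply (rule sum.mono_neutral_right)
          apply (rule finite_atMost)
          using insert.prems apply blast
          using supp by blast
        also have "\<dots> = e m u + (\<Sum>j\<in>S. e j u)" using insert.hyps by simp
        finally have "e m u = u - (\<Sum>j\<in>S. e j u)" by (simp add: eq_diff_eq)
        moreover have "(\<Sum>j\<in>S. e j u) \<in> W" by (rule subspace_sum[OF W]) (rule Sin)
        ultimately show ?thesis using True subspace_diff[OF W u] by simp
      qed
    qed
  qed
  show ?thesis using key[of "{..d}"] i by auto
qed


lemma ezero: assumes "t + D \<le> d" "\<forall>i\<le>d. (\<exists>v. e i v \<noteq> 0) \<longleftrightarrow> t \<le> i \<and> i \<le> t + D"
  "j \<le> d" "j < t \<or> t + D < j" shows "e j x = 0"
  using assms by force

lemma prim: assumes td: "t + D \<le> d" and supp: "\<forall>i\<le>d. (\<exists>v. e i v \<noteq> 0) \<longleftrightarrow> t \<le> i \<and> i \<le> t + D"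
  shows "primitive_idempotent_seq scale a (\<lambda>i. e (t+i)) D"
  unfolding primitive_idempotent_seq_def
proof (intro exI[of _ "\<lambda>i. th (t+i)"] conjI allI impI)
  show "inj_on (\<lambda>i. th (t + i)) {..D}" unfolding inj_on_def
  proof (intro ballI impI)
    fix x y assume "x \<in> {..D}" "y \<in> {..D}" "th (t + x) = th (t + y)"
    then have "t + x = t + y" using thd td unfolding inj_on_def by (metis add_le_mono1 atMost_iff add.commute le_trans nat_add_left_cancel_le)
    then show "x = y" by simp
  qed
next
  fix i v assume i: "i \<le> D"
  have m: "t + i \<le> d" using i td by auto
  have "a (e (t+i) v) = (\<Sum>k\<le>d. scale (th k) (e k (e (t+i) v)))" by (rule adef)
  also have "\<dots> = (\<Sum>k\<le>d. if k = t+i then scale (th (t+i)) (e (t+i) v) else 0)"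
    by (rule sum.cong) (auto simp: ee m)
  also have "\<dots> = scale (th (t+i)) (e (t+i) v)" using m by simp
  finally show "a (e (t+i) v) = scale (th (t+i)) (e (t+i) v)" .
next
  fix i assume i: "i \<le> D"
  then show "\<exists>v. e (t + i) v \<noteq> 0" using supp td by auto
next
  fix v
  have "(\<Sum>i\<le>D. e (t+i) v) = (\<Sum>k\<in>(\<lambda>i. t+i) ` {..D}. e k v)"
    by (subst sum.reindex) (auto simp: inj_on_def)
  also have "\<dots> = (\<Sum>k\<le>d. e k v)"
    apply (rule sum.mono_neutral_left)
      apply (rule finite_atMost)
    using td apply force
    apply clarify
    subgoal for k
    proof -
      assume k: "k \<notin> (\<lambda>i. t+i) ` {..D}" "k \<le> d"
      have "k < t \<or> t + D < k"
      proof (rule ccontr)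
        assume "\<not> (k < t \<or> t + D < k)"
        then have "k = t + (k - t)" "k - t \<in> {..D}" by auto
        then show False using k(1) by blast
      qed
      then show ?thesis by (rule ezero[OF td supp k(2)])
    qed
    done
  also have "\<dots> = v" by (rule esum)
  finally show "(\<Sum>i\<le>D. e (t+i) v) = v" .
qed

lemma tri: assumes td: "t + D \<le> d" and supp: "\<forall>i\<le>d. (\<exists>v. e i v \<noteq> 0) \<longleftrightarrow> t \<le> i \<and> i \<le> t + D"
  shows "tridiagonal_action as (\<lambda>i. e (t+i)) D"
  unfolding tridiagonal_action_def
proof (intro allI impI exI)
  fix i v assume i: "i \<le> D"
  define J where "J = {j. j \<le> D \<and> i \<le> Suc j \<and> j \<le> Suc i}"
  define x where "x = as (e (t+i) v)"
  have "x = (\<Sum>k\<le>d. e k x)" by (rule esum[symmetric])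
  also have "\<dots> = (\<Sum>k\<in>(\<lambda>j. t+j) ` J. e k x)"
    apply (rule sum.mono_neutral_right)
      apply (rule finite_atMost)
    using td apply (force simp: J_def)
    apply clarify
    subgoal for k
    proof -
      assume k: "k \<le> d" "k \<notin> (\<lambda>j. t+j) ` J"
      show "e k x = 0"
      proof (cases "k < t \<or> t + D < k")
        case True then show ?thesis by (rule ezero[OF td supp k(1)])
      next
        case False
        then obtain j where j: "k = t + j" "j \<le> D" by (metis le_add_diff_inverse not_le add_le_cancel_left)
        then have "j \<notin> J" using k by auto
        then have "i + 2 \<le> j \<or> j + 2 \<le> i" using j unfolding J_def by auto
        then have "k + 2 \<le> t + i \<or> t + i + 2 \<le> k" using j by auto
        then show ?thesis unfolding x_def using eae k(1) td i by auto
      qed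
    qed
    done
  also have "\<dots> = (\<Sum>j\<in>J. e (t+j) x)"
    by (subst sum.reindex) (auto simp: inj_on_def)
  finally show "as (e (t+i) v) = (\<Sum>j\<in>{j. j \<le> D \<and> i \<le> Suc j \<and> j \<le> Suc i}. e (t+j) x)"
    unfolding J_def x_def .
qed

end

lemma T_sym: assumes H: "T_module scale d th ths a e as es" shows "T_module scale d ths th as es a e"
proof -
  have A: "\<forall>i\<le>d. \<forall>j\<le>d. \<forall>k\<le>d. k < nat \<bar>int i - int j\<bar> \<longrightarrow>
          (\<forall>v. es i ((a ^^ k) (es j v)) = 0) \<and> (\<forall>v. e i ((as ^^ k) (e j v)) = 0)"
    using H unfolding T_module_def by (elim conjE) assumption
  have L: "\<forall>i\<le>d. Vector_Spaces.linear scale scale (e i) \<and> Vector_Spaces.linear scale scale (es i)"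
    using H unfolding T_module_def by (elim conjE) assumption
  have A': "\<forall>i\<le>d. \<forall>j\<le>d. \<forall>k\<le>d. k < nat \<bar>int i - int j\<bar> \<longrightarrow>
          (\<forall>v. e i ((as ^^ k) (e j v)) = 0) \<and> (\<forall>v. es i ((a ^^ k) (es j v)) = 0)"
    using A by blast
  have L': "\<forall>i\<le>d. Vector_Spaces.linear scale scale (es i) \<and> Vector_Spaces.linear scale scale (e i)"
    using L by blast
  show ?thesis using H A' L' unfolding T_module_def by (elim conjE, intro conjI) assumption+
qed

lemma irr_sym: "irreducible_T_module scale d th ths a e as es \<Longrightarrow> irreducible_T_module scale d ths th as es a e"
  unfolding irreducible_T_module_def
  apply (elim conjE, intro conjI)
    apply (erule T_sym)
   apply assumption
  apply (intro allI impI)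
  subgoal for W
    apply (erule allE[of _ W])
    apply (erule mp)
    by blast
  done

locale tpair = vector_space scale for scale :: "'f::field \<Rightarrow> 'v::ab_group_add \<Rightarrow> 'v" +
  fixes d :: nat and th ths :: "nat \<Rightarrow> 'f" and a as :: "'v \<Rightarrow> 'v" and e es :: "nat \<Rightarrow> 'v \<Rightarrow> 'v"
  assumes irr: "irreducible_T_module scale d th ths a e as es"
    and thd: "inj_on th {..d}" and thsd: "inj_on ths {..d}"
begin

lemma TT: "T_module scale d th ths a e as es" using irr unfolding irreducible_T_module_def by blast

sublocale t1: tset scale d th ths a as e es
  by unfold_locales (fact TT, fact thd)
sublocale t2: tset scale d ths th as a es e
  by unfold_locales (rule T_sym[OF TT], fact thsd)

lemma irrW: assumes W: "subspace W" and aW: "a ` W \<subseteq> W" and asW: "as ` W \<subseteq> W"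
  shows "W = {0} \<or> W = UNIV"
proof -
  have "\<forall>i\<le>d. e i ` W \<subseteq> W \<and> es i ` W \<subseteq> W"
    using t1.proj_inv[OF W aW] t2.proj_inv[OF W asW] by blast
  then show ?thesis using irr W aW asW unfolding irreducible_T_module_def by blast
qed

lemma delta_le:
  assumes rd: "r + \<delta> \<le> d" and td: "t + \<delta>s \<le> d"
    and es_supp: "\<forall>i\<le>d. (\<exists>v. es i v \<noteq> 0) \<longleftrightarrow> r \<le> i \<and> i \<le> r + \<delta>"
    and e_supp: "\<forall>i\<le>d. (\<exists>v. e i v \<noteq> 0) \<longleftrightarrow> t \<le> i \<and> i \<le> t + \<delta>s"
  shows "\<delta> \<le> \<delta>s"
proof (rule ccontr)
  assume "\<not> \<delta> \<le> \<delta>s"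
  then have lt: "\<delta>s < \<delta>" by simp
  define U where "U i = {x. (\<forall>j\<le>d. r+i < j \<longrightarrow> es j x = 0) \<and> (\<forall>j\<le>d. j < t+i \<longrightarrow> e j x = 0)}" for i
  define G where "G = (\<Union>i. U i)"
  define W where "W = span G"
  have ez: "j \<le> d \<Longrightarrow> j < t \<or> t + \<delta>s < j \<Longrightarrow> e j x = 0" for j x
    by (rule t1.ezero[OF td e_supp])
  have A: "a u - scale (th (t+i)) u \<in> U (Suc i)" if u: "u \<in> U i" for u i
  proof -
    have "es j (a u - scale (th (t+i)) u) = 0" if j: "j \<le> d" "r + Suc i < j" for j
    proof -
      have es0: "es j u = 0" using u j unfolding U_def by auto
      have "es j (a u) = es j (a (\<Sum>k\<le>d. es k u))" by (simp only: t2.esum)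
      also have "\<dots> = (\<Sum>k\<le>d. es j (a (es k u)))"
        by (simp add: t1.vsp.linear_sum[OF t1.lin_a] t1.vsp.linear_sum[OF t2.lin_e[OF j(1)]])
      also have "\<dots> = 0"
      proof (rule sum.neutral, intro ballI)
        fix k assume k: "k \<in> {..d}"
        show "es j (a (es k u)) = 0"
        proof (cases "r + i < k")
          case True
          then have "es k u = 0" using u k unfolding U_def by auto
          then show ?thesis using t1.vsp.linear_0[OF t1.lin_a] t1.vsp.linear_0[OF t2.lin_e[OF j(1)]] by simp
        next
          case False
          then show ?thesis using t2.eae[of j k] j k by auto
        qed
      qed
      finally show ?thesis using es0 by (simp add: t1.vsp.linear_diff[OF t2.lin_e[OF j(1)]] t1.vsp.linear_scale[OF t2.lin_e[OF j(1)]])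
    qed
    moreover have "e j (a u - scale (th (t+i)) u) = 0" if j: "j \<le> d" "j < t + Suc i" for j
    proof -
      have "e j (a u - scale (th (t+i)) u) = scale (th j) (e j u) - scale (th (t+i)) (e j u)"
        by (simp add: t1.vsp.linear_diff[OF t1.lin_e[OF j(1)]] t1.vsp.linear_scale[OF t1.lin_e[OF j(1)]] t1.ea[OF j(1)])
      moreover have "j < t + i \<Longrightarrow> e j u = 0" using u j unfolding U_def by auto
      moreover have "\<not> j < t + i \<Longrightarrow> j = t + i" using j by simp
      ultimately show ?thesis by (cases "j < t + i") auto
    qed
    ultimately show ?thesis unfolding U_def by auto
  qed
  have B: "as u - scale (ths (r+i)) u \<in> U (i - 1)" if u: "u \<in> U i" for u i
  proof -
    have "es j (as u - scale (ths (r+i)) u) = 0" if j: "j \<le> d" "r + (i - 1) < j" for j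
    proof -
      have "es j (as u - scale (ths (r+i)) u) = scale (ths j) (es j u) - scale (ths (r+i)) (es j u)"
        by (simp add: t1.vsp.linear_diff[OF t2.lin_e[OF j(1)]] t1.vsp.linear_scale[OF t2.lin_e[OF j(1)]] t2.ea[OF j(1)])
      moreover have "r + i < j \<Longrightarrow> es j u = 0" using u j unfolding U_def by auto
      moreover have "j = r + i \<or> r + i < j" using j by auto
      ultimately show ?thesis by auto
    qed
    moreover have "e j (as u - scale (ths (r+i)) u) = 0" if j: "j \<le> d" "j < t + (i - 1)" for j
    proof -
      have e0: "e j u = 0" using u j unfolding U_def by auto
      have "e j (as u) = e j (as (\<Sum>k\<le>d. e k u))" by (simp only: t1.esum)
      also have "\<dots> = (\<Sum>k\<le>d. e j (as (e k u)))"
        by (simp add: t1.vsp.linear_sum[OF t1.lin_as] t1.vsp.linear_sum[OF t1.lin_e[OF j(1)]])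
      also have "\<dots> = 0"
      proof (rule sum.neutral, intro ballI)
        fix k assume k: "k \<in> {..d}"
        show "e j (as (e k u)) = 0"
        proof (cases "k < t + i")
          case True
          then have "e k u = 0" using u k unfolding U_def by auto
          then show ?thesis using t1.vsp.linear_0[OF t1.lin_as] t1.vsp.linear_0[OF t1.lin_e[OF j(1)]] by simp
        next
          case False
          show ?thesis
          proof (cases "i = 0")
            case True then show ?thesis using ez[of j] j by simp
          next
            case i0: False
            then have "j + 2 \<le> k" using False j by linarith
            then show ?thesis using t1.eae[of j k] j k by auto
          qed
        qed
      qed
      finally show ?thesis using e0 by (simp add: t1.vsp.linear_diff[OF t1.lin_e[OF j(1)]] t1.vsp.linear_scale[OF t1.lin_e[OF j(1)]])
    qed
    ultimately show ?thesis unfolding U_def by auto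
  qed
  have Wsub: "subspace W" unfolding W_def by simp
  have aW: "a ` W \<subseteq> W"
  proof
    fix y assume "y \<in> a ` W"
    then obtain x where x: "x \<in> span G" and y: "y = a x" unfolding W_def by auto
    have "a x \<in> span G"
      using x
    proof (rule span_induct)
      show "subspace {x. a x \<in> span G}"
        by (rule t1.vsp.linear_subspace_linear_preimage[OF t1.lin_a subspace_span])
    next
      fix x assume "x \<in> G"
      then obtain i where xi: "x \<in> U i" unfolding G_def by auto
      have "a x = (a x - scale (th (t+i)) x) + scale (th (t+i)) x" by simp
      moreover have "a x - scale (th (t+i)) x \<in> span G"
        using A[OF xi] unfolding G_def by (blast intro: span_base)
      moreover have "scale (th (t+i)) x \<in> span G"
        using xi unfolding G_def by (blast intro: span_base span_scale)
      ultimately show "a x \<in> span G" by (metis span_add)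
    qed
    then show "y \<in> W" using y W_def by simp
  qed
  have asW: "as ` W \<subseteq> W"
  proof
    fix y assume "y \<in> as ` W"
    then obtain x where x: "x \<in> span G" and y: "y = as x" unfolding W_def by auto
    have "as x \<in> span G"
      using x
    proof (rule span_induct)
      show "subspace {x. as x \<in> span G}"
        by (rule t1.vsp.linear_subspace_linear_preimage[OF t1.lin_as subspace_span])
    next
      fix x assume "x \<in> G"
      then obtain i where xi: "x \<in> U i" unfolding G_def by auto
      have "as x = (as x - scale (ths (r+i)) x) + scale (ths (r+i)) x" by simp
      moreover have "as x - scale (ths (r+i)) x \<in> span G"
        using B[OF xi] unfolding G_def by (blast intro: span_base)
      moreover have "scale (ths (r+i)) x \<in> span G"
        using xi unfolding G_def by (blast intro: span_base span_scale)
      ultimately show "as x \<in> span G" by (metis span_add)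
    qed
    then show "y \<in> W" using y W_def by simp
  qed
  have W01: "W = {0} \<or> W = UNIV" by (rule irrW[OF Wsub aW asW])
  have rdd: "r \<le> d" using rd by simp
  obtain v0 where v0: "es r v0 \<noteq> 0" using es_supp rdd by auto
  have "es r v0 \<in> U 0" unfolding U_def
  proof (intro CollectI conjI allI impI)
    fix j assume "j \<le> d" "r + 0 < j"
    then show "es j (es r v0) = 0" using t2.ee[of j r] rdd by simp
  next
    fix j assume "j \<le> d" "j < t + 0"
    then show "e j (es r v0) = 0" using ez by simp
  qed
  then have "es r v0 \<in> W" unfolding W_def G_def by (blast intro: span_base)
  then have WU: "W = UNIV" using W01 v0 by auto
  have rdd2: "r + \<delta> \<le> d" using rd by simp
  obtain v1 where v1: "es (r+\<delta>) v1 \<noteq> 0" using es_supp rdd2 by auto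
  have kill: "es (r+\<delta>) x = 0" if x: "x \<in> W" for x
    using x unfolding W_def
  proof (rule span_induct)
    show "subspace {x. es (r+\<delta>) x = 0}"
      by (rule t1.vsp.linear_subspace_kernel[OF t2.lin_e[OF rdd2]])
  next
    fix x assume "x \<in> G"
    then obtain i where xi: "x \<in> U i" unfolding G_def by auto
    show "es (r+\<delta>) x = 0"
    proof (cases "i \<le> \<delta>s")
      case True
      then show ?thesis using xi lt rdd2 unfolding U_def by auto
    next
      case False
      have "x = (\<Sum>j\<le>d. e j x)" by (rule t1.esum[symmetric])
      also have "\<dots> = 0"
      proof (rule sum.neutral, intro ballI)
        fix j assume j: "j \<in> {..d}"
        show "e j x = 0"
        proof (cases "j < t + i")
          case True then show ?thesis using xi j unfolding U_def by auto
        next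
          case False then show ?thesis using ez[of j x] j \<open>\<not> i \<le> \<delta>s\<close> by auto
        qed
      qed
      finally show ?thesis using t1.vsp.linear_0[OF t2.lin_e[OF rdd2]] by simp
    qed
  qed
  have "es (r+\<delta>) (es (r+\<delta>) v1) = es (r+\<delta>) v1" using t2.ee[OF rdd2 rdd2] by simp
  moreover have "es (r+\<delta>) (es (r+\<delta>) v1) = 0" using kill WU by simp
  ultimately show False using v1 by simp
qed

end
theorem proposition5p4:
  fixes scale :: "'f::field \<Rightarrow> 'v::ab_group_add \<Rightarrow> 'v"
    and d :: nat and th ths :: "nat \<Rightarrow> 'f"
    and a as :: "'v \<Rightarrow> 'v" and e es :: "nat \<Rightarrow> 'v \<Rightarrow> 'v"
    and r \<delta> t \<delta>s :: nat
  assumes vs: "vector_space scale"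
    and fin: "\<exists>B. finite B \<and> module.span scale B = UNIV"
    and th_dist: "inj_on th {..d}" and ths_dist: "inj_on ths {..d}"
    and recur: "\<exists>c::'f. \<forall>i. 2 \<le> i \<and> i + 1 \<le> d \<longrightarrow>
                 (th (i-2) - th (i+1)) / (th (i-1) - th i) = c \<and>
                 (ths (i-2) - ths (i+1)) / (ths (i-1) - ths i) = c"
    and irr: "irreducible_T_module scale d th ths a e as es"
    and rd: "r + \<delta> \<le> d" and td: "t + \<delta>s \<le> d"
    and es_supp: "\<forall>i\<le>d. (\<exists>v. es i v \<noteq> 0) \<longleftrightarrow> r \<le> i \<and> i \<le> r + \<delta>"
    and e_supp: "\<forall>i\<le>d. (\<exists>v. e i v \<noteq> 0) \<longleftrightarrow> t \<le> i \<and> i \<le> t + \<delta>s"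
  shows "\<delta> = \<delta>s \<and>
         tridiagonal_system scale a (\<lambda>i. e (t + i)) \<delta> as (\<lambda>i. es (r + i)) \<delta>"
proof -
  interpret P1: tpair scale d th ths a as e es
    unfolding tpair_def tpair_axioms_def using vs irr th_dist ths_dist by blast
  interpret P2: tpair scale d ths th as a es e
    unfolding tpair_def tpair_axioms_def using vs irr_sym[OF irr] th_dist ths_dist by blast
  have le1: "\<delta> \<le> \<delta>s" by (rule P1.delta_le[OF rd td es_supp e_supp])
  have le2: "\<delta>s \<le> \<delta>" by (rule P2.delta_le[OF td rd e_supp es_supp])
  have eq: "\<delta> = \<delta>s" using le1 le2 by simp
  have td': "t + \<delta> \<le> d" using td eq by simp
  have e_supp': "\<forall>i\<le>d. (\<exists>v. e i v \<noteq> 0) \<longleftrightarrow> t \<le> i \<and> i \<le> t + \<delta>" using e_supp eq by simp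
  have "tridiagonal_system scale a (\<lambda>i. e (t + i)) \<delta> as (\<lambda>i. es (r + i)) \<delta>"
    unfolding tridiagonal_system_def
  proof (intro conjI allI impI)
    show "Vector_Spaces.linear scale scale a" by (rule P1.t1.lin_a)
    show "Vector_Spaces.linear scale scale as" by (rule P1.t1.lin_as)
    show "primitive_idempotent_seq scale a (\<lambda>i. e (t + i)) \<delta>" by (rule P1.t1.prim[OF td' e_supp'])
    show "primitive_idempotent_seq scale as (\<lambda>i. es (r + i)) \<delta>" by (rule P1.t2.prim[OF rd es_supp])
    show "tridiagonal_action as (\<lambda>i. e (t + i)) \<delta>" by (rule P1.t1.tri[OF td' e_supp'])
    show "tridiagonal_action a (\<lambda>i. es (r + i)) \<delta>" by (rule P1.t2.tri[OF rd es_supp])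
  next
    fix W assume "module.subspace scale W \<and> a ` W \<subseteq> W \<and> as ` W \<subseteq> W"
    then show "W = {0} \<or> W = UNIV" using P1.irrW by blast
  qed
  then show ?thesis using eq by simp
qed

end
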